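(* Let $1\le k\le m$ and let $\nu$ be any permutation of $[k]$. Then: (1) $W_\nu^m(x)=x$ for all $x\in S_{k,m}$. (2) The orbit structure of $W_\nu$ on $S_{k,m}$ equals the orbit structure of cyclic rotation $A\mapsto\{v+1 \bmod m: v\in A\}$ (residues taken in $\{1,\dots,m\}$) acting on the $k$-element subsets of $[m]$ (equivalently, of rotation on 2-colored necklaces with $k$ white and $m-k$ black beads); in particular it does not depend on $\nu$. (3) For $1\le i\le k$, $1\le j\le m$ let $g_{i,j}(x)=1$ if $x_i=j$ and $0$ otherwise. Then each $d_{i,j}=g_{i,j}-g_{k+1-i,\,m+1-j}$ is $0$-mesic for $W_\nu$ on $S_{k,m}$. For $1\le j\le m$ let $f_j(x)=1$ if $j\in\{x_1,\dots,x_k\}$ and $0$ otherwise; then $f_j$ is homomesic for $W_\nu$ on $S_{k,m}$ with average $k/m$ along every orbit. Hence any real linear combination of the $d_{i,j}$ and $f_j$ is homomesic.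
   Context: $S_{k,m}$ is the set of integer $k$-tuples $x=(x_1,\dots,x_k)$ with $0<x_1<\dots<x_k<m+1$. Winching on index $i$: $W_i(x)=y$ with $y_j=x_j$ for $j\ne i$, $y_i=x_i+1$ if $x_i+1<x_{i+1}$, and $y_i=x_{i-1}+1$ otherwise, with conventions $x_0=0$, $x_{k+1}=m+1$. For a permutation $\nu$ of $[k]$, $W_\nu=W_{\nu(k)}\circ W_{\nu(k-1)}\circ\cdots\circ W_{\nu(1)}$. A function on a finite set with a permutation $\tau$ is homomesic if its average over every $\tau$-orbit is the same constant, and $0$-mesic if that constant is $0$. *)

theory Defs
  imports Complex_Main "HOL-Library.Multiset" "HOL-Combinatorics.Permutations"
begin

text \<open>A tuple x = (x_1,...,x_k) is represented as a list xs with x_i = xs ! (i-1).\<close>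

definition S :: "nat \<Rightarrow> nat \<Rightarrow> nat list set" where
  "S k m = {xs. length xs = k \<and> sorted_wrt (<) xs \<and> (\<forall>v\<in>set xs. 0 < v \<and> v < m + 1)}"

definition entry :: "nat \<Rightarrow> nat \<Rightarrow> nat list \<Rightarrow> nat \<Rightarrow> nat" where
  "entry k m xs j = (if j = 0 then 0 else if j = k + 1 then m + 1 else xs ! (j - 1))"

definition winch :: "nat \<Rightarrow> nat \<Rightarrow> nat \<Rightarrow> nat list \<Rightarrow> nat list" where
  "winch k m i xs =
     xs[i - 1 := (if entry k m xs i + 1 < entry k m xs (i + 1)
                  then entry k m xs i + 1 else entry k m xs (i - 1) + 1)]"

text \<open>W_nu = W_(nu k) o ... o W_(nu 1): apply W_(nu 1) first.\<close>
definition winch_perm :: "nat \<Rightarrow> nat \<Rightarrow> (nat \<Rightarrow> nat) \<Rightarrow> nat list \<Rightarrow> nat list" where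
  "winch_perm k m \<nu> xs = fold (\<lambda>i. winch k m (\<nu> i)) [1..<k + 1] xs"

definition rot :: "nat \<Rightarrow> nat set \<Rightarrow> nat set" where
  "rot m A = (\<lambda>v. v mod m + 1) ` A"

definition orbit :: "('a \<Rightarrow> 'a) \<Rightarrow> 'a \<Rightarrow> 'a set" where
  "orbit f x = {(f ^^ n) x | n. True}"

definition orbit_structure :: "('a \<Rightarrow> 'a) \<Rightarrow> 'a set \<Rightarrow> nat multiset" where
  "orbit_structure f A = image_mset card (mset_set (orbit f ` A))"

definition orbit_avg :: "('a \<Rightarrow> 'a) \<Rightarrow> ('a \<Rightarrow> real) \<Rightarrow> 'a \<Rightarrow> real" where
  "orbit_avg f g x = (\<Sum>y\<in>orbit f x. g y) / real (card (orbit f x))"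

definition homomesic_with :: "'a set \<Rightarrow> ('a \<Rightarrow> 'a) \<Rightarrow> ('a \<Rightarrow> real) \<Rightarrow> real \<Rightarrow> bool" where
  "homomesic_with A f g c \<longleftrightarrow> (\<forall>x\<in>A. orbit_avg f g x = c)"

definition homomesic :: "'a set \<Rightarrow> ('a \<Rightarrow> 'a) \<Rightarrow> ('a \<Rightarrow> real) \<Rightarrow> bool" where
  "homomesic A f g \<longleftrightarrow> (\<exists>c. homomesic_with A f g c)"

definition gfun :: "nat \<Rightarrow> nat \<Rightarrow> nat list \<Rightarrow> real" where
  "gfun i j xs = (if xs ! (i - 1) = j then 1 else 0)"

definition dfun :: "nat \<Rightarrow> nat \<Rightarrow> nat \<Rightarrow> nat \<Rightarrow> nat list \<Rightarrow> real" where
  "dfun k m i j xs = gfun i j xs - gfun (k + 1 - i) (m + 1 - j) xs"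

definition ffun :: "nat \<Rightarrow> nat list \<Rightarrow> real" where
  "ffun j xs = (if j \<in> set xs then 1 else 0)"

end

theory Submission
  imports Defs
begin


lemma entry0[simp]: "entry k m xs 0 = 0" by (simp add: entry_def)
lemma entryK[simp]: "entry k m xs (Suc k) = m+1" by (simp add: entry_def)
lemma entryM: "1 \<le> j \<Longrightarrow> j \<le> k \<Longrightarrow> entry k m xs j = xs!(j-1)" by (simp add: entry_def)

lemma chain_mono:
  assumes "\<forall>j\<le>k. f j < (f (Suc j)::nat)" "a < b" "b \<le> Suc k"
  shows "f a < f b"
  using assms(2,3)
proof (induction b)
  case 0 then show ?case by simp
next
  case (Suc b)
  show ?case
  proof (cases "a = b")
    case True then show ?thesis using assms(1) Suc by auto
  next
    case False
    then have "f a < f b" using Suc by auto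
    also have "f b < f (Suc b)" using assms(1) Suc by auto
    finally show ?thesis .
  qed
qed

lemma S_chain: "xs \<in> S k m \<longleftrightarrow> length xs = k \<and> (\<forall>j\<le>k. entry k m xs j < entry k m xs (Suc j))"
proof
  assume a: "xs \<in> S k m"
  then have l: "length xs = k" and s: "sorted_wrt (<) xs" and b: "\<forall>v\<in>set xs. 0 < v \<and> v < m + 1"
    by (auto simp: S_def)
  have "entry k m xs j < entry k m xs (Suc j)" if "j \<le> k" for j
  proof -
    consider "j = 0" "k = 0" | "j = 0" "k > 0" | "j > 0" "j = k" | "j > 0" "j < k" using \<open>j\<le>k\<close> by linarith
    then show ?thesis
    proof cases
      case 1 then show ?thesis by simp
    next
      case 2 then show ?thesis using b l by (auto simp: entry_def)
    next
      case 3 then show ?thesis using b l by (auto simp: entry_def)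
    next
      case 4 then show ?thesis using s l by (auto simp: entry_def sorted_wrt_iff_nth_less)
    qed
  qed
  then show "length xs = k \<and> (\<forall>j\<le>k. entry k m xs j < entry k m xs (Suc j))" using l by auto
next
  assume a: "length xs = k \<and> (\<forall>j\<le>k. entry k m xs j < entry k m xs (Suc j))"
  then have l: "length xs = k" and c: "\<forall>j\<le>k. entry k m xs j < entry k m xs (Suc j)" by auto
  have s: "sorted_wrt (<) xs"
    unfolding sorted_wrt_iff_nth_Suc_transp[OF transp_on_less]
  proof (intro allI impI)
    fix i assume "Suc i < length xs"
    then have "entry k m xs (Suc i) < entry k m xs (Suc (Suc i))" using c l by auto
    then show "xs ! i < xs ! Suc i" using \<open>Suc i < length xs\<close> l by (simp add: entry_def)
  qed
  have "0 < v \<and> v < m + 1" if "v \<in> set xs" for v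
  proof -
    obtain p where p: "p < k" "v = xs ! p" using \<open>v\<in>set xs\<close> l by (auto simp: in_set_conv_nth)
    have "entry k m xs 0 < entry k m xs (Suc p)" by (rule chain_mono[OF c]) (use p in auto)
    moreover have "entry k m xs (Suc p) < entry k m xs (Suc k)" by (rule chain_mono[OF c]) (use p in auto)
    ultimately show ?thesis using p by (simp add: entry_def)
  qed
  then show "xs \<in> S k m" using l s by (auto simp: S_def)
qed

lemma length_winch[simp]: "length (winch k m i xs) = length xs"
  by (simp add: winch_def)

lemma winch_nth_other: "p \<noteq> i \<Longrightarrow> 1 \<le> p \<Longrightarrow> 1 \<le> i \<Longrightarrow> winch k m i xs ! (p-1) = xs ! (p-1)"
  by (simp add: winch_def)

lemma entry_update_other: "j \<noteq> b \<Longrightarrow> 1 \<le> b \<Longrightarrow> entry k m (xs[b-1 := v]) j = entry k m xs j"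
  by (simp add: entry_def)

lemma entry_update_same: "1 \<le> b \<Longrightarrow> b \<le> k \<Longrightarrow> length xs = k \<Longrightarrow> entry k m (xs[b-1 := v]) b = v"
  by (simp add: entry_def)

lemma winch_S: assumes "xs \<in> S k m" "1 \<le> i" "i \<le> k" shows "winch k m i xs \<in> S k m"
proof -
  from assms(1) have l: "length xs = k" and c: "\<forall>j\<le>k. entry k m xs j < entry k m xs (Suc j)"
    by (auto simp: S_chain)
  define v where "v = (if entry k m xs i + 1 < entry k m xs (i + 1)
                  then entry k m xs i + 1 else entry k m xs (i - 1) + 1)"
  have w: "winch k m i xs = xs[i-1 := v]" by (simp add: winch_def v_def)
  have c1: "entry k m xs (i-1) < entry k m xs i" using c[rule_format, of "i-1"] assms by auto
  have c2: "entry k m xs i < entry k m xs (Suc i)" using c assms by auto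
  have lo: "entry k m xs (i-1) < v" and hi: "v < entry k m xs (Suc i)"
    using c1 c2 by (auto simp: v_def)
  have e: "entry k m (xs[i-1:=v]) j = (if j = i then v else entry k m xs j)" for j
    using entry_update_other[of j i k m xs v] entry_update_same[of i k xs m v] assms l by auto
  have "entry k m (xs[i-1:=v]) j < entry k m (xs[i-1:=v]) (Suc j)" if "j \<le> k" for j
  proof -
    consider "Suc j = i" | "j = i" | "j \<noteq> i" "Suc j \<noteq> i" by auto
    then show ?thesis
    proof cases
      case 1 then have "j = i - 1" by simp
      then show ?thesis using lo e 1 by simp
    next
      case 2 then show ?thesis using hi e by simp
    next
      case 3 then show ?thesis using e c that by simp
    qed
  qed
  then show ?thesis using l w by (simp add: S_chain)
qed

lemma winch_inj: assumes "xs \<in> S k m" "ys \<in> S k m" "1 \<le> i" "i \<le> k"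
  and eq: "winch k m i xs = winch k m i ys" shows "xs = ys"
proof -
  have lx: "length xs = k" and ly: "length ys = k" using assms by (auto simp: S_def)
  have oth: "xs ! q = ys ! q" if "q < k" "q \<noteq> i - 1" for q
    using winch_nth_other[of "Suc q" i k m xs] winch_nth_other[of "Suc q" i k m ys] eq that assms
    by auto
  have ee: "entry k m xs j = entry k m ys j" if "j \<noteq> i" "j \<le> Suc k" for j
  proof -
    have "j = 0 \<or> j = Suc k \<or> (0 < j \<and> j - 1 < k \<and> j - 1 \<noteq> i - 1)" using that assms(3) by auto
    then show ?thesis using oth by (auto simp: entry_def)
  qed
  from assms(1) have cx: "\<forall>j\<le>k. entry k m xs j < entry k m xs (Suc j)" by (auto simp: S_chain)
  from assms(2) have cy: "\<forall>j\<le>k. entry k m ys j < entry k m ys (Suc j)" by (auto simp: S_chain)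
  define lo where "lo = entry k m xs (i-1)"
  define hi where "hi = entry k m xs (Suc i)"
  have lo': "lo = entry k m ys (i-1)" and hi': "hi = entry k m ys (Suc i)" using ee assms
    by (auto simp: lo_def hi_def)
  define a where "a = entry k m xs i"
  define b where "b = entry k m ys i"
  have ab: "lo < a" "a < hi" "lo < b" "b < hi"
    using cx[rule_format, of "i-1"] cx[rule_format, of i] cy[rule_format, of "i-1"] cy[rule_format, of i] assms
    unfolding a_def b_def by (auto simp: lo_def hi_def lo'[symmetric] hi'[symmetric] simp del: One_nat_def)
  have wx: "winch k m i xs ! (i-1) = (if a + 1 < hi then a + 1 else lo + 1)"
    using lx assms(3,4) by (simp add: winch_def a_def lo_def hi_def)
  have wy: "winch k m i ys ! (i-1) = (if b + 1 < hi then b + 1 else lo + 1)"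
    using ly assms(3,4) by (simp add: winch_def b_def lo' hi')
  have "(if a + 1 < hi then a + 1 else lo + 1) = (if b + 1 < hi then b + 1 else lo + 1)"
    using eq wx wy by metis
  then have "a = b" using ab by (auto split: if_splits)
  then have "xs ! (i-1) = ys ! (i-1)" using assms by (simp add: a_def b_def entry_def)
  then show ?thesis using oth lx ly by (metis nth_equalityI)
qed



definition swp :: "nat list \<Rightarrow> nat list \<Rightarrow> bool" where
  "swp L M \<longleftrightarrow> (\<exists>A B a b. L = A@[a,b]@B \<and> M = A@[b,a]@B \<and> a \<noteq> b \<and> a \<noteq> Suc b \<and> b \<noteq> Suc a)"

definition mv :: "nat list \<Rightarrow> nat list \<Rightarrow> bool" where
  "mv L M \<longleftrightarrow> M = rotate1 L \<or> swp L M"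

lemma mv_pres: "mv L M \<Longrightarrow> set M = set L \<and> distinct M = distinct L"
  unfolding mv_def swp_def by auto

lemma mvs_pres: "mv\<^sup>*\<^sup>* L M \<Longrightarrow> set M = set L \<and> distinct M = distinct L"
  by (induction rule: rtranclp_induct) (auto dest: mv_pres)

lemma rot_all: "mv\<^sup>*\<^sup>* (X@Z) (Z@X)"
proof (induction X arbitrary: Z)
  case Nil then show ?case by simp
next
  case (Cons a X)
  have "mv ((a#X)@Z) (X@(Z@[a]))" by (simp add: mv_def)
  moreover have "mv\<^sup>*\<^sup>* (X@(Z@[a])) ((Z@[a])@X)" by (rule Cons.IH)
  ultimately show ?case by simp
qed

lemma front: "(\<forall>x\<in>set X. x \<noteq> c \<and> x \<noteq> Suc c \<and> c \<noteq> Suc x) \<Longrightarrow> mv\<^sup>*\<^sup>* (X@c#Z) (c#X@Z)"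
proof (induction X arbitrary: Z rule: rev_induct)
  case Nil then show ?case by simp
next
  case (snoc x X)
  have "mv ((X@[x])@c#Z) (X@[c,x]@Z)"
    unfolding mv_def swp_def using snoc.prems by (intro disjI2 exI[of _ X] exI[of _ Z]) auto
  moreover have "mv\<^sup>*\<^sup>* (X@c#(x#Z)) (c#X@(x#Z))" using snoc by auto
  ultimately show ?case by simp
qed

lemma lift1: assumes "mv L M" "set L \<subseteq> {1..k}" "distinct L"
  shows "mv\<^sup>*\<^sup>* (Suc k # L) (Suc k # M)"
proof -
  consider "M = rotate1 L" | "swp L M" using assms(1) by (auto simp: mv_def)
  then show ?thesis
  proof cases
    case 2
    then obtain A B a b where "L = A@[a,b]@B" "M = A@[b,a]@B" "a \<noteq> b" "a \<noteq> Suc b" "b \<noteq> Suc a"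
      by (auto simp: swp_def)
    then have "mv (Suc k # L) (Suc k # M)" unfolding mv_def swp_def
      by (intro disjI2 exI[of _ "Suc k # A"] exI[of _ B]) auto
    then show ?thesis by simp
  next
    case 1
    show ?thesis
    proof (cases L)
      case Nil then show ?thesis using 1 by simp
    next
      case (Cons b L')
      have M: "M = L'@[b]" using 1 Cons by simp
      have b: "1 \<le> b" "b \<le> k" using assms Cons by auto
      show ?thesis
      proof (cases "b = k")
        case False
        have "mv (Suc k # b # L') (b # Suc k # L')" unfolding mv_def swp_def
          using b False by (intro disjI2 exI[of _ "[]"] exI[of _ L']) auto
        moreover have "mv (b # Suc k # L') (Suc k # L' @ [b])" by (simp add: mv_def)
        ultimately show ?thesis using Cons M by simp
      next
        case True
        have "mv (Suc k # k # L') (k # L' @ [Suc k])" by (simp add: mv_def)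
        moreover have "mv (k # L' @ [Suc k]) (L' @ [Suc k, k])" by (simp add: mv_def)
        moreover have "mv\<^sup>*\<^sup>* (L' @ Suc k # [k]) (Suc k # L' @ [k])"
        proof (rule front, intro ballI)
          fix x assume "x \<in> set L'"
          then have "x \<in> {1..k}" "x \<noteq> k" using assms Cons True by auto
          then show "x \<noteq> Suc k \<and> x \<noteq> Suc (Suc k) \<and> Suc k \<noteq> Suc x" by auto
        qed
        ultimately show ?thesis using Cons M True
          by (metis (no_types, lifting) append_Cons append_Nil converse_rtranclp_into_rtranclp)
      qed
    qed
  qed
qed

lemma lift: "mv\<^sup>*\<^sup>* L M \<Longrightarrow> set L \<subseteq> {1..k} \<Longrightarrow> distinct L \<Longrightarrow> mv\<^sup>*\<^sup>* (Suc k # L) (Suc k # M)"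
proof (induction rule: rtranclp_induct)
  case base then show ?case by simp
next
  case (step y z)
  have "set y = set L" "distinct y = distinct L" using mvs_pres[OF step(1)] by auto
  then have "mv\<^sup>*\<^sup>* (Suc k # y) (Suc k # z)" using lift1[OF step(2)] step by auto
  then show ?case using step by auto
qed

lemma comb: "distinct L \<Longrightarrow> set L = {1..k} \<Longrightarrow> mv\<^sup>*\<^sup>* L (rev [1..<k+1])"
proof (induction k arbitrary: L)
  case 0 then show ?case by simp
next
  case (Suc k)
  have "Suc k \<in> set L" using Suc by auto
  then obtain X Y where L: "L = X @ Suc k # Y" by (meson split_list)
  have r1: "mv\<^sup>*\<^sup>* L (Suc k # (Y@X))" using rot_all[of X "Suc k # Y"] L by simp
  have d1: "distinct (Y@X)" using Suc.prems L by auto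
  have "set L = insert (Suc k) (set (Y@X))" "Suc k \<notin> set (Y@X)" using Suc.prems L by auto
  then have "set (Y@X) = {1..Suc k} - {Suc k}" using Suc.prems by auto
  also have "\<dots> = {1..k}" by auto
  finally have d: "distinct (Y@X)" "set (Y@X) = {1..k}" using d1 by auto
  have "mv\<^sup>*\<^sup>* (Y@X) (rev [1..<k+1])" using Suc.IH d by auto
  then have "mv\<^sup>*\<^sup>* (Suc k # (Y@X)) (Suc k # rev [1..<k+1])" using lift d by auto
  then show ?case using r1 by simp
qed



definition Wl :: "nat \<Rightarrow> nat \<Rightarrow> nat list \<Rightarrow> nat list \<Rightarrow> nat list" where
  "Wl k m L = fold (winch k m) L"

definition Tsum :: "nat \<Rightarrow> nat \<Rightarrow> (nat list \<Rightarrow> nat list) \<Rightarrow> (nat list \<Rightarrow> real) \<Rightarrow> nat list \<Rightarrow> real" where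
  "Tsum k m F g y = (\<Sum>t<m. g ((F ^^ t) y))"

definition Pc :: "nat \<Rightarrow> nat \<Rightarrow> (nat list \<Rightarrow> nat list) \<Rightarrow> nat list \<Rightarrow> bool" where
  "Pc k m G L \<longleftrightarrow> (\<exists>h. bij_betw h (S k m) (S k m) \<and> (\<forall>y\<in>S k m. h (Wl k m L y) = G (h y))
     \<and> (\<forall>y\<in>S k m. \<forall>i\<in>{1..k}. \<forall>j. Tsum k m (Wl k m L) (gfun i j) y = Tsum k m G (gfun i j) (h y)))"

lemma Wl_Cons: "Wl k m (a#L) = Wl k m L \<circ> winch k m a" by (simp add: Wl_def fun_eq_iff)
lemma Wl_snoc: "Wl k m (L@[a]) = winch k m a \<circ> Wl k m L" by (simp add: Wl_def fun_eq_iff)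
lemma Wl_app: "Wl k m (L@M) = Wl k m M \<circ> Wl k m L" by (simp add: Wl_def fun_eq_iff)

lemma Wl_S: "set L \<subseteq> {1..k} \<Longrightarrow> y \<in> S k m \<Longrightarrow> Wl k m L y \<in> S k m"
  by (induction L arbitrary: y) (auto simp: Wl_def winch_S)

lemma pow_S: "(\<And>y. y \<in> S k m \<Longrightarrow> F y \<in> S k m) \<Longrightarrow> y \<in> S k m \<Longrightarrow> (F ^^ n) y \<in> S k m"
  by (induction n) auto

lemma Wl_nth: "a \<notin> set L \<Longrightarrow> 1 \<le> a \<Longrightarrow> \<forall>x\<in>set L. 1 \<le> x \<Longrightarrow> Wl k m L y ! (a-1) = y ! (a-1)"
proof (induction L arbitrary: y)
  case Nil then show ?case by (simp add: Wl_def)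
next
  case (Cons b L)
  have "Wl k m (b#L) y ! (a-1) = winch k m b y ! (a-1)" using Cons by (simp add: Wl_Cons)
  also have "\<dots> = y ! (a-1)" using Cons.prems by (intro winch_nth_other) auto
  finally show ?case .
qed

lemma finite_S: "finite (S k m)"
proof -
  have "S k m \<subseteq> {xs. set xs \<subseteq> {0..m} \<and> length xs = k}" by (auto simp: S_def)
  moreover have "finite {xs. set xs \<subseteq> {0..m} \<and> length xs = k}"
    by (rule finite_lists_length_eq) simp
  ultimately show ?thesis by (rule finite_subset)
qed

lemma winch_bij: "1 \<le> a \<Longrightarrow> a \<le> k \<Longrightarrow> bij_betw (winch k m a) (S k m) (S k m)"
proof -
  assume a: "1 \<le> a" "a \<le> k"
  have inj: "inj_on (winch k m a) (S k m)"
  proof (rule inj_onI)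
    fix x y assume "x \<in> S k m" "y \<in> S k m" "winch k m a x = winch k m a y"
    then show "x = y" using winch_inj[of x k m y a] a by blast
  qed
  have sub: "winch k m a ` S k m \<subseteq> S k m"
  proof
    fix z assume "z \<in> winch k m a ` S k m"
    then obtain x where "x \<in> S k m" "z = winch k m a x" by blast
    then show "z \<in> S k m" using winch_S[of x k m a] a by simp
  qed
  have "winch k m a ` S k m = S k m" by (rule endo_inj_surj[OF finite_S sub inj])
  then show ?thesis using inj by (simp add: bij_betw_def)
qed

lemma winch_comm:
  assumes "1 \<le> a" "1 \<le> b" "a \<noteq> b" "a \<noteq> Suc b" "b \<noteq> Suc a"
  shows "winch k m a (winch k m b xs) = winch k m b (winch k m a xs)"
proof -
  define va where "va = (if entry k m xs a + 1 < entry k m xs (a + 1)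
                  then entry k m xs a + 1 else entry k m xs (a - 1) + 1)"
  define vb where "vb = (if entry k m xs b + 1 < entry k m xs (b + 1)
                  then entry k m xs b + 1 else entry k m xs (b - 1) + 1)"
  have A: "winch k m a xs = xs[a-1 := va]" by (simp add: winch_def va_def)
  have B: "winch k m b xs = xs[b-1 := vb]" by (simp add: winch_def vb_def)
  have ea: "entry k m (xs[a-1 := va]) j = entry k m xs j" if "j \<in> {b-1, b, b+1}" for j
    using entry_update_other[of j a k m xs va] assms that by auto
  have eb: "entry k m (xs[b-1 := vb]) j = entry k m xs j" if "j \<in> {a-1, a, a+1}" for j
    using entry_update_other[of j b k m xs vb] assms that by auto
  have 1: "winch k m a (xs[b-1 := vb]) = (xs[b-1 := vb])[a-1 := va]"
    unfolding winch_def va_def using eb by simp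
  have 2: "winch k m b (xs[a-1 := va]) = (xs[a-1 := va])[b-1 := vb]"
    unfolding winch_def vb_def using ea by simp
  have "a - 1 \<noteq> b - 1" using assms by auto
  then show ?thesis using 1 2 A B by (simp add: list_update_swap)
qed

lemma swp_eq: "swp L M \<Longrightarrow> \<forall>x\<in>set L. 1 \<le> x \<Longrightarrow> Wl k m L = Wl k m M"
proof -
  assume "swp L M" "\<forall>x\<in>set L. 1 \<le> x"
  then obtain A B a b where "L = A@[a,b]@B" "M = A@[b,a]@B" "a \<noteq> b" "a \<noteq> Suc b" "b \<noteq> Suc a"
    "1 \<le> a" "1 \<le> b" by (auto simp: swp_def)
  note ab = this
  have "Wl k m [a,b] = Wl k m [b,a]"
  proof
    fix xs show "Wl k m [a,b] xs = Wl k m [b,a] xs"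
      using winch_comm[of a b k m xs] ab by (simp add: Wl_def)
  qed
  then show ?thesis using ab(1,2) by (simp only: Wl_app)
qed

lemma sum_shift1: "(F m :: real) = F 0 \<Longrightarrow> (\<Sum>t<m. F (Suc t)) = (\<Sum>t<m. F t)"
proof -
  assume "F m = F 0"
  have "(\<Sum>t<m. F (Suc t)) - (\<Sum>t<m. F t) = (\<Sum>t<m. F (Suc t) - F t)" by (simp add: sum_subtractf)
  also have "\<dots> = 0" using sum_lessThan_telescope[of F m] \<open>F m = F 0\<close> by simp
  finally show ?thesis by simp
qed



context
  fixes k m :: nat and G :: "nat list \<Rightarrow> nat list"
  assumes GS: "\<And>y. y \<in> S k m \<Longrightarrow> G y \<in> S k m"
  and Gm: "\<And>y. y \<in> S k m \<Longrightarrow> (G ^^ m) y = y"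
begin

lemma Pc_pow: assumes "Pc k m G L" "set L \<subseteq> {1..k}" shows "\<forall>y\<in>S k m. (Wl k m L ^^ m) y = y"
proof
  fix y assume y: "y \<in> S k m"
  obtain h where h: "bij_betw h (S k m) (S k m)" "\<forall>y\<in>S k m. h (Wl k m L y) = G (h y)"
    using assms by (auto simp: Pc_def)
  have WS: "\<And>y. y \<in> S k m \<Longrightarrow> Wl k m L y \<in> S k m" using Wl_S assms by auto
  have "h ((Wl k m L ^^ n) y) = (G ^^ n) (h y)" for n
    by (induction n) (auto simp: h(2)[rule_format] pow_S[OF WS y])
  then have "h ((Wl k m L ^^ m) y) = h y" using Gm h(1) y by (auto simp: bij_betw_def)
  moreover have "(Wl k m L ^^ m) y \<in> S k m" using pow_S[OF WS y] .
  ultimately show "(Wl k m L ^^ m) y = y" using h(1) y by (auto simp: bij_betw_def inj_on_def)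
qed

lemma Pc_rot: assumes "Pc k m G (L'@[a])" "set (a#L') \<subseteq> {1..k}" "distinct (a#L')"
  shows "Pc k m G (a#L')"
proof -
  let ?W = "Wl k m (a#L')" and ?M = "Wl k m (L'@[a])" and ?w = "winch k m a"
  obtain h where h: "bij_betw h (S k m) (S k m)" "\<forall>y\<in>S k m. h (?M y) = G (h y)"
    "\<forall>y\<in>S k m. \<forall>i\<in>{1..k}. \<forall>j. Tsum k m ?M (gfun i j) y = Tsum k m G (gfun i j) (h y)"
    using assms(1) by (auto simp: Pc_def)
  have a: "1 \<le> a" "a \<le> k" using assms by auto
  have wb: "bij_betw ?w (S k m) (S k m)" using winch_bij a by auto
  have WS: "\<And>y. y \<in> S k m \<Longrightarrow> ?W y \<in> S k m" using Wl_S assms by (metis)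
  have wS: "\<And>y. y \<in> S k m \<Longrightarrow> ?w y \<in> S k m" using winch_S a by auto
  have MW: "?M (?w y) = ?w (?W y)" for y by (simp add: Wl_Cons Wl_snoc)
  have Mp: "\<forall>y\<in>S k m. (?M ^^ m) y = y" using Pc_pow assms by auto
  have pw: "(?M ^^ n) (?w y) = ?w ((?W ^^ n) y)" for n y by (induction n) (auto simp: MW)
  have Wp: "(?W ^^ m) y = y" if "y \<in> S k m" for y
  proof -
    have "?w ((?W ^^ m) y) = ?w y" using pw Mp wS that by metis
    then show ?thesis using winch_inj[OF pow_S[OF WS that] that a] by auto
  qed
  have stat: "Tsum k m ?W (gfun i j) y = Tsum k m ?M (gfun i j) (?w y)" if "y \<in> S k m" "i \<in> {1..k}" for y i j
  proof (cases "i = a")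
    case False
    have "gfun i j (?w z) = gfun i j z" for z using winch_nth_other[of i a k m z] False that a
      by (simp add: gfun_def)
    then show ?thesis by (simp add: Tsum_def pw)
  next
    case True
    have "gfun i j (?w z) = gfun i j (?W z)" for z
    proof -
      have "\<forall>x\<in>set L'. 1 \<le> x" using assms by auto
      then have "Wl k m L' (?w z) ! (a-1) = ?w z ! (a-1)" using Wl_nth[of a L' k m "?w z"] assms by auto
      then show ?thesis using True by (simp add: gfun_def Wl_Cons)
    qed
    then have "Tsum k m ?M (gfun i j) (?w y) = (\<Sum>t<m. gfun i j ((?W ^^ Suc t) y))"
      by (simp add: Tsum_def pw)
    also have "\<dots> = Tsum k m ?W (gfun i j) y" unfolding Tsum_def
      by (rule sum_shift1) (simp add: Wp that)
    finally show ?thesis by simp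
  qed
  show ?thesis unfolding Pc_def
  proof (intro exI[of _ "h \<circ> ?w"] conjI ballI allI)
    show "bij_betw (h \<circ> ?w) (S k m) (S k m)" using bij_betw_trans wb h(1) by blast
  next
    fix y assume y: "y \<in> S k m"
    show "(h \<circ> ?w) (?W y) = G ((h \<circ> ?w) y)" using h(2) MW wS y by (metis comp_apply)
  next
    fix y i j assume y: "y \<in> S k m" and i: "i \<in> {1..k}"
    show "Tsum k m ?W (gfun i j) y = Tsum k m G (gfun i j) ((h \<circ> ?w) y)"
      using stat[OF y i] h(3) wS[OF y] i by simp
  qed
qed

lemma Pc_all: assumes "Pc k m G (rev [1..<k+1])" "distinct L" "set L = {1..k}"
  shows "Pc k m G L"
proof -
  have "mv\<^sup>*\<^sup>* L (rev [1..<k+1])" using comb assms by auto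
  then have "distinct L \<and> set L = {1..k} \<longrightarrow> Pc k m G L"
  proof (induction rule: converse_rtranclp_induct)
    case base then show ?case using assms by auto
  next
    case (step L M)
    show ?case
    proof
      assume d: "distinct L \<and> set L = {1..k}"
      then have "Pc k m G M" using step mv_pres[OF step(1)] by auto
      show "Pc k m G L"
      proof (cases "M = rotate1 L")
        case True
        show ?thesis
        proof (cases L)
          case Nil then show ?thesis using True \<open>Pc k m G M\<close> by simp
        next
          case (Cons a L')
          then have "Pc k m G (L'@[a])" using True \<open>Pc k m G M\<close> by simp
          moreover have "set (a#L') \<subseteq> {1..k}" "distinct (a#L')" using d Cons by auto
          ultimately show ?thesis using Pc_rot[of L' a] Cons by blast
        qed
      next
        case False
        then have "swp L M" using step(1) by (auto simp: mv_def)
        then have "Wl k m L = Wl k m M" using swp_eq d by auto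
        then show ?thesis using \<open>Pc k m G M\<close> by (simp add: Pc_def)
      qed
    qed
  qed
  then show ?thesis using assms by auto
qed

end



lemma rot_sub: "0 < m \<Longrightarrow> rot m B \<subseteq> {1..m}"
  unfolding rot_def using mod_less_divisor by (auto simp: Suc_leI)

lemma modc_my: "x \<in> {1..m} \<Longrightarrow> x mod (m::nat) = (if x = m then 0 else x)"
  by (cases "x = m") auto

lemma rot_inj: "0 < (m::nat) \<Longrightarrow> inj_on (\<lambda>v. v mod m + 1) {1..m}"
proof (rule inj_onI)
  fix x y assume m: "0 < m" and x: "x \<in> {1..m}" and y: "y \<in> {1..m}" and e: "x mod m + 1 = y mod m + 1"
  have "x mod m = (if x = m then 0 else x)" using x by (rule modc_my)
  moreover have "y mod m = (if y = m then 0 else y)" using y by (rule modc_my)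
  ultimately show "x = y" using e x y by (auto split: if_splits)
qed

lemma rot_card: "0 < m \<Longrightarrow> B \<subseteq> {1..m} \<Longrightarrow> card (rot m B) = card B"
  unfolding rot_def by (rule card_image, rule inj_on_subset[OF rot_inj])

lemma rot_step1: "0 < m \<Longrightarrow> B \<subseteq> {1..m} \<Longrightarrow> 1 \<le> v \<Longrightarrow> v + 1 \<le> m \<Longrightarrow> (v + 1 \<in> rot m B \<longleftrightarrow> v \<in> B)"
proof -
  assume a: "0 < m" "B \<subseteq> {1..m}" "1 \<le> v" "v + 1 \<le> m"
  have "u mod m + 1 = v + 1 \<longleftrightarrow> u = v" if "u \<in> {1..m}" for u
  proof -
    have "u mod m = (if u = m then 0 else u)" using that by (rule modc_my)
    then show ?thesis using a that by auto
  qed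
  show ?thesis
  proof
    assume "v + 1 \<in> rot m B"
    then obtain u where "u \<in> B" "u mod m + 1 = v + 1" by (auto simp: rot_def)
    then show "v \<in> B" using \<open>\<And>u. u \<in> {1..m} \<Longrightarrow> _\<close> a by blast
  next
    assume "v \<in> B"
    moreover have "v mod m + 1 = v + 1" using a by auto
    ultimately show "v + 1 \<in> rot m B" unfolding rot_def by (metis image_eqI)
  qed
qed

lemma rot_step0: "0 < m \<Longrightarrow> B \<subseteq> {1..m} \<Longrightarrow> (1 \<in> rot m B \<longleftrightarrow> m \<in> B)"
proof -
  assume a: "0 < m" "B \<subseteq> {1..m}"
  have "u mod m + 1 = 1 \<longleftrightarrow> u = m" if "u \<in> {1..m}" for u
  proof -
    have "u mod m = (if u = m then 0 else u)" using that by (rule modc_my)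
    then show ?thesis using a that by auto
  qed
  show ?thesis
  proof
    assume "1 \<in> rot m B"
    then obtain u where "u \<in> B" "u mod m + 1 = 1" by (auto simp: rot_def)
    then show "m \<in> B" using \<open>\<And>u. u \<in> {1..m} \<Longrightarrow> _\<close> a by blast
  next
    assume "m \<in> B"
    moreover have "m mod m + 1 = 1" by simp
    ultimately show "1 \<in> rot m B" unfolding rot_def by (metis image_eqI)
  qed
qed

lemma rotp_sub: "0 < m \<Longrightarrow> A \<subseteq> {1..m} \<Longrightarrow> (rot m ^^ t) A \<subseteq> {1..m}"
proof (induction t)
  case (Suc t) then show ?case using rot_sub[of m] by simp
qed simp

lemma rotp_card: "0 < m \<Longrightarrow> A \<subseteq> {1..m} \<Longrightarrow> card ((rot m ^^ t) A) = card A"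
proof (induction t)
  case (Suc t) then show ?case using rot_card[of m "(rot m ^^ t) A"] rotp_sub[of m A t] by simp
qed simp

lemma rotp_shift: assumes "0 < m" "A \<subseteq> {1..m}" "1 \<le> v" "v + s \<le> m"
  shows "(v + s \<in> (rot m ^^ (t + s)) A \<longleftrightarrow> v \<in> (rot m ^^ t) A)"
  using assms(4)
proof (induction s)
  case 0 then show ?case by simp
next
  case (Suc s)
  have "v + Suc s \<in> (rot m ^^ (t + Suc s)) A \<longleftrightarrow> (v + s) + 1 \<in> rot m ((rot m ^^ (t + s)) A)" by simp
  also have "\<dots> \<longleftrightarrow> v + s \<in> (rot m ^^ (t + s)) A"
    by (rule rot_step1) (use assms rotp_sub Suc.prems in auto)
  also have "\<dots> \<longleftrightarrow> v \<in> (rot m ^^ t) A" using Suc by auto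
  finally show ?case .
qed

lemma rotp_wrap: assumes "0 < m" "A \<subseteq> {1..m}"
  shows "1 \<in> (rot m ^^ Suc t) A \<longleftrightarrow> m \<in> (rot m ^^ t) A"
  using rot_step0[OF assms(1) rotp_sub[OF assms, of t]] by simp

lemma rotp_period: assumes "0 < m" "A \<subseteq> {1..m}" shows "(rot m ^^ m) A = A"
proof -
  have "v \<in> (rot m ^^ m) A \<longleftrightarrow> v \<in> A" if v: "v \<in> {1..m}" for v
  proof -
    have "v \<in> (rot m ^^ m) A \<longleftrightarrow> 1 + (v - 1) \<in> (rot m ^^ ((m - v + 1) + (v - 1))) A"
      using v by simp
    also have "\<dots> \<longleftrightarrow> 1 \<in> (rot m ^^ Suc (m - v)) A"
      by (subst rotp_shift) (use assms v in auto)
    also have "\<dots> \<longleftrightarrow> m \<in> (rot m ^^ (m - v)) A" by (rule rotp_wrap[OF assms])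
    also have "\<dots> \<longleftrightarrow> v + (m - v) \<in> (rot m ^^ (0 + (m - v))) A" using v by simp
    also have "\<dots> \<longleftrightarrow> v \<in> A" by (subst rotp_shift) (use assms v in auto)
    finally show ?thesis .
  qed
  then show ?thesis using rotp_sub[OF assms, of m] assms(2) by blast
qed



definition newv :: "nat \<Rightarrow> nat \<Rightarrow> nat list \<Rightarrow> nat \<Rightarrow> nat" where
  "newv k m y p = (if y!(k-1) < m then y!p + 1 else entry k m y p + 1)"

definition Zl :: "nat \<Rightarrow> nat \<Rightarrow> nat list \<Rightarrow> nat \<Rightarrow> nat list" where
  "Zl k m y s = map (\<lambda>p. if p+1 < s then y!p else newv k m y p) [0..<k]"

lemma S_facts: assumes "y \<in> S k m"
  shows "length y = k" "\<And>p q. p < q \<Longrightarrow> q < k \<Longrightarrow> y!p < y!q" "\<And>p. p < k \<Longrightarrow> 1 \<le> y!p \<and> y!p \<le> m"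
proof -
  show "length y = k" using assms by (auto simp: S_def)
  show "\<And>p q. p < q \<Longrightarrow> q < k \<Longrightarrow> y!p < y!q" using assms by (auto simp: S_def sorted_wrt_iff_nth_less)
  show "\<And>p. p < k \<Longrightarrow> 1 \<le> y!p \<and> y!p \<le> m"
  proof -
    fix p assume "p < k"
    then have "y!p \<in> set y" using assms by (auto simp: S_def)
    then show "1 \<le> y!p \<and> y!p \<le> m" using assms by (auto simp: S_def)
  qed
qed

lemma WR_step: assumes y: "y \<in> S k m" and s: "1 \<le> s" "s \<le> k"
  shows "winch k m s (Zl k m y (Suc s)) = Zl k m y s"
proof -
  note F = S_facts[OF y]
  let ?Z = "Zl k m y (Suc s)"
  have lZ: "length ?Z = k" by (simp add: Zl_def)
  have e1: "entry k m ?Z s = y!(s-1)" using s by (simp add: entry_def Zl_def)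
  have e2: "entry k m ?Z (Suc s) = (if s = k then m+1 else newv k m y s)" using s by (simp add: entry_def Zl_def)
  have e0: "entry k m ?Z (s-1) = entry k m y (s-1)" using s by (simp add: entry_def Zl_def)
  have top: "y!(k-1) \<le> m" using F(3)[of "k-1"] s by auto
  have key: "(if y!(s-1) + 1 < entry k m ?Z (Suc s) then y!(s-1) + 1 else entry k m y (s-1) + 1) = newv k m y (s-1)"
  proof (cases "y!(k-1) < m")
    case True
    have "y!(s-1) + 1 < entry k m ?Z (Suc s)"
    proof (cases "s = k")
      case True then show ?thesis using e2 \<open>y!(k-1) < m\<close> by simp
    next
      case False
      then have "y!(s-1) < y!s" using F(2)[of "s-1" s] s by auto
      then show ?thesis using e2 False True by (simp add: newv_def)
    qed
    then show ?thesis using True by (simp add: newv_def)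
  next
    case False
    then have ym: "y!(k-1) = m" using top by auto
    have "entry k m ?Z (Suc s) = y!(s-1) + 1"
    proof (cases "s = k")
      case True then show ?thesis using e2 ym by simp
    next
      case False then show ?thesis using e2 ym s by (simp add: newv_def entry_def)
    qed
    then show ?thesis using ym by (simp add: newv_def)
  qed
  show ?thesis
  proof (rule nth_equalityI)
    show "length (winch k m s ?Z) = length (Zl k m y s)" by (simp add: Zl_def)
  next
    fix p assume "p < length (winch k m s ?Z)"
    then have p: "p < k" by (simp add: Zl_def)
    show "winch k m s ?Z ! p = Zl k m y s ! p"
    proof (cases "p = s - 1")
      case True
      have "winch k m s ?Z ! p = (if entry k m ?Z s + 1 < entry k m ?Z (s + 1)
                  then entry k m ?Z s + 1 else entry k m ?Z (s - 1) + 1)"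
        using True lZ s by (simp add: winch_def)
      also have "\<dots> = newv k m y (s-1)" unfolding Suc_eq_plus1
        by (simp only: key[unfolded Suc_eq_plus1] e1[unfolded Suc_eq_plus1] e0[unfolded Suc_eq_plus1])
      finally show ?thesis using True s p by (simp add: Zl_def)
    next
      case False
      have "winch k m s ?Z ! (Suc p - 1) = ?Z ! (Suc p - 1)"
        by (rule winch_nth_other) (use False s in auto)
      moreover have "(p < s) = (Suc p < s)" using False by auto
      ultimately show ?thesis using p by (simp add: Zl_def)
    qed
  qed
qed

lemma WR_fold: assumes y: "y \<in> S k m" shows "d \<le> k \<Longrightarrow> Wl k m (rev [k+1-d..<k+1]) y = Zl k m y (k+1-d)"
proof (induction d)
  case 0
  have "Zl k m y (k+1) = y" using S_facts(1)[OF y]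
    by (intro nth_equalityI) (auto simp: Zl_def)
  then show ?case by (simp add: Wl_def)
next
  case (Suc d)
  define s where "s = k - d"
  have s: "1 \<le> s" "s \<le> k" "k + 1 - Suc d = s" "k+1-d = Suc s" using Suc.prems by (auto simp: s_def)
  have "[s..<k+1] = s # [Suc s..<k+1]" using s by (simp add: upt_rec)
  then have "Wl k m (rev [s..<k+1]) y = winch k m s (Wl k m (rev [Suc s..<k+1]) y)"
    by (simp add: Wl_snoc)
  also have "\<dots> = winch k m s (Zl k m y (Suc s))"
    using Suc.IH[OF Suc_leD[OF Suc.prems]] unfolding s(4) by simp
  also have "\<dots> = Zl k m y s" by (rule WR_step[OF y s(1,2)])
  finally show ?case using s by simp
qed

lemma WR_set: assumes y: "y \<in> S k m" and k: "1 \<le> k"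
  shows "set (Wl k m (rev [1..<k+1]) y) = rot m (set y)"
proof -
  note F = S_facts[OF y]
  have "Wl k m (rev [1..<k+1]) y = Zl k m y 1" using WR_fold[OF y, of k] by simp
  then have W: "set (Wl k m (rev [1..<k+1]) y) = newv k m y ` {..<k}"
    by (auto simp: Zl_def)
  have sy: "set y = (\<lambda>p. y!p) ` {..<k}" using F(1) by (auto simp: set_conv_nth)
  have R: "rot m (set y) = (\<lambda>p. y!p mod m + 1) ` {..<k}" unfolding rot_def sy by auto
  have top: "y!(k-1) \<le> m" using F(3)[of "k-1"] k by auto
  show ?thesis
  proof (cases "y!(k-1) < m")
    case True
    have "y!p mod m + 1 = newv k m y p" if "p < k" for p
    proof -
      have "p = k-1 \<or> p < k-1" using that by auto
      then have "y!p \<le> y!(k-1)" using F(2)[of p "k-1"] k by auto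
      then show ?thesis using True by (simp add: newv_def)
    qed
    then show ?thesis using W R by (metis (no_types, lifting) image_cong lessThan_iff)
  next
    case False
    then have ym: "y!(k-1) = m" using top by auto
    define \<sigma> where "\<sigma> p = (if p = 0 then k-1 else p-1)" for p
    have f: "newv k m y p = y!(\<sigma> p) mod m + 1" if "p < k" for p
    proof (cases "p = 0")
      case True then show ?thesis using ym by (simp add: newv_def \<sigma>_def)
    next
      case False
      then have "y!(p-1) < y!(k-1)" using F(2)[of "p-1" "k-1"] that by auto
      then show ?thesis using ym False that by (simp add: newv_def \<sigma>_def entry_def)
    qed
    have sig: "\<sigma> ` {..<k} = {..<k}"
    proof
      show "\<sigma> ` {..<k} \<subseteq> {..<k}" using k by (auto simp: \<sigma>_def)
    next
      show "{..<k} \<subseteq> \<sigma> ` {..<k}"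
      proof
        fix q assume q: "q \<in> {..<k}"
        show "q \<in> \<sigma> ` {..<k}"
        proof (cases "q = k - 1")
          case True then have "\<sigma> 0 = q" by (simp add: \<sigma>_def)
          then show ?thesis using k by force
        next
          case False then have "\<sigma> (Suc q) = q" "Suc q < k" using q by (auto simp: \<sigma>_def)
          then show ?thesis by force
        qed
      qed
    qed
    have "newv k m y ` {..<k} = (\<lambda>p. y!p mod m + 1) ` (\<sigma> ` {..<k})"
      using f by (auto simp: image_iff)
    then show ?thesis using W R sig by simp
  qed
qed



lemma sum_shift: fixes c :: nat assumes "\<And>t. (F (t + m) :: real) = F t"
  shows "(\<Sum>t<m. F (t + c)) = (\<Sum>t<m. F t)"
proof (induction c)
  case 0 then show ?case by simp
next
  case (Suc c)
  have "(\<Sum>t<m. F (Suc t + c)) = (\<Sum>t<m. F (t + c))"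
    by (rule sum_shift1[of "\<lambda>t. F (t + c)"]) (use assms[of c] in \<open>simp add: add.commute\<close>)
  then show ?case using Suc by simp
qed

context
  fixes m :: nat and A :: "nat set"
  assumes m: "0 < m" and A: "A \<subseteq> {1..m}"
begin

abbreviation At where "At t \<equiv> (rot m ^^ t) A"

lemma At_sub: "At t \<subseteq> {1..m}" using rotp_sub[OF m A] .
lemma At_fin: "finite (At t)" using At_sub finite_subset by blast
lemma At_card: "card (At t) = card A" using rotp_card[OF m A] .

lemma At_per: "At (t + m) = At t"
proof -
  have "At (t + m) = (rot m ^^ t) ((rot m ^^ m) A)" by (simp add: funpow_add)
  then show ?thesis using rotp_period[OF m A] by simp
qed

lemma At_shift: "1 \<le> v \<Longrightarrow> v + s \<le> m \<Longrightarrow> (v + s \<in> At (t + s) \<longleftrightarrow> v \<in> At t)"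
  using rotp_shift[OF m A] by blast

lemma cnt_sum: "(\<Sum>v\<in>{1..m}. of_bool (v \<in> B) :: real) = card B" if "B \<subseteq> {1..m}" for B
proof -
  have "{1..m} \<inter> {v. v \<in> B} = B" using that by auto
  then show ?thesis by simp
qed

lemma f_count: assumes v: "v \<in> {1..m}" shows "(\<Sum>t<m. of_bool (v \<in> At t) :: real) = card A"
proof -
  define c where "c v = (\<Sum>t<m. of_bool (v \<in> At t) :: real)" for v
  have step: "c (Suc v) = c v" if "1 \<le> v" "Suc v \<le> m" for v
  proof -
    have "c (Suc v) = (\<Sum>t<m. of_bool (Suc v \<in> At (t + 1)) :: real)"
      unfolding c_def by (rule sum_shift[symmetric]) (simp add: At_per)
    also have "\<dots> = c v" unfolding c_def using At_shift[of v 1] that by simp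
    finally show ?thesis .
  qed
  have all: "c v = c 1" if "v \<in> {1..m}" for v
    using that
  proof (induction v)
    case 0 then show ?case by simp
  next
    case (Suc v) then show ?case using step[of v] by (cases "v = 0") auto
  qed
  have "(\<Sum>v\<in>{1..m}. c v) = (\<Sum>t<m. \<Sum>v\<in>{1..m}. of_bool (v \<in> At t) :: real)"
    unfolding c_def by (rule sum.swap)
  also have "\<dots> = (\<Sum>t<m. real (card A))" using cnt_sum[OF At_sub] At_card by simp
  also have "\<dots> = m * card A" by simp
  finally have "(\<Sum>v\<in>{1..m}. c v) = m * card A" .
  moreover have "(\<Sum>v\<in>{1..m}. c v) = (\<Sum>v\<in>{1..m}. c 1)" by (rule sum.cong[OF refl all])
  then have "(\<Sum>v\<in>{1..m}. c v) = m * c 1" by simp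
  ultimately have "c 1 = card A" using m by simp
  then show ?thesis using all[OF v] by (simp add: c_def)
qed

definition cnt :: "nat \<Rightarrow> nat \<Rightarrow> nat \<Rightarrow> nat" where
  "cnt t a b = card {v\<in>At t. a \<le> v \<and> v \<le> b}"

lemma cnt_shift: assumes "1 \<le> a" "b + s \<le> m"
  shows "cnt (t + s) (a + s) (b + s) = cnt t a b"
proof -
  have "{v\<in>At (t+s). a + s \<le> v \<and> v \<le> b + s} = (\<lambda>v. v + s) ` {v\<in>At t. a \<le> v \<and> v \<le> b}"
  proof
    show "{v\<in>At (t+s). a + s \<le> v \<and> v \<le> b + s} \<subseteq> (\<lambda>v. v + s) ` {v\<in>At t. a \<le> v \<and> v \<le> b}"
    proof
      fix w assume w: "w \<in> {v\<in>At (t+s). a + s \<le> v \<and> v \<le> b + s}"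
      then have "(w - s) + s \<in> At (t + s)" by auto
      then have "w - s \<in> At t" using At_shift[of "w - s" s t] w assms by auto
      then show "w \<in> (\<lambda>v. v + s) ` {v\<in>At t. a \<le> v \<and> v \<le> b}" using w by (auto intro!: image_eqI[of _ _ "w - s"])
    qed
  next
    show "(\<lambda>v. v + s) ` {v\<in>At t. a \<le> v \<and> v \<le> b} \<subseteq> {v\<in>At (t+s). a + s \<le> v \<and> v \<le> b + s}"
      using At_shift assms by auto
  qed
  moreover have "inj (\<lambda>v::nat. v + s)" by (auto simp: inj_def)
  ultimately show ?thesis unfolding cnt_def by (simp add: card_image inj_on_subset)
qed

lemma cnt_split_top: assumes "a \<le> b + 1" "b + 1 \<le> m"
  shows "cnt t a (b+1) = cnt t a b + of_bool (b + 1 \<in> At t)"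
proof -
  have "{v\<in>At t. a \<le> v \<and> v \<le> b+1} = {v\<in>At t. a \<le> v \<and> v \<le> b} \<union> ({b+1} \<inter> At t)" using assms by auto
  moreover have "finite {v\<in>At t. a \<le> v \<and> v \<le> b}" using At_fin by auto
  ultimately show ?thesis unfolding cnt_def by (cases "b + 1 \<in> At t") auto
qed

lemma cnt_split_bot: assumes "a \<le> b"
  shows "cnt t a b = of_bool (a \<in> At t) + cnt t (a+1) b"
proof -
  have "{v\<in>At t. a \<le> v \<and> v \<le> b} = ({a} \<inter> At t) \<union> {v\<in>At t. a + 1 \<le> v \<and> v \<le> b}" using assms by auto
  moreover have "finite {v\<in>At t. a + 1 \<le> v \<and> v \<le> b}" using At_fin by auto
  ultimately show ?thesis unfolding cnt_def by (cases "a \<in> At t") auto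
qed

end



lemma ptw: "(N'::nat) + of_bool l = N + of_bool e \<Longrightarrow>
  (of_bool (e \<and> N' = i) - of_bool (l \<and> N = i) :: real) = of_bool (i \<le> N') - of_bool (i \<le> N)"
  by (cases e; cases l) auto

context
  fixes m :: nat and A :: "nat set"
  assumes m: "0 < m" and A: "A \<subseteq> {1..m}"
begin

lemma cnt_per: "cnt m A (t + m) a b = cnt m A t a b"
  unfolding cnt_def[OF m A] using At_per[OF m A] by simp

lemma cnt_concat: assumes "a \<le> b + 1" "b \<le> c"
  shows "cnt m A t a c = cnt m A t a b + cnt m A t (b+1) c"
proof -
  have "{v\<in>At m A t. a \<le> v \<and> v \<le> c} = {v\<in>At m A t. a \<le> v \<and> v \<le> b} \<union> {v\<in>At m A t. b + 1 \<le> v \<and> v \<le> c}"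
    using assms by auto
  moreover have "finite {v\<in>At m A t. a \<le> v \<and> v \<le> b}" "finite {v\<in>At m A t. b + 1 \<le> v \<and> v \<le> c}"
    using At_fin[OF m A] by auto
  moreover have "{v\<in>At m A t. a \<le> v \<and> v \<le> b} \<inter> {v\<in>At m A t. b + 1 \<le> v \<and> v \<le> c} = {}" by auto
  ultimately show ?thesis unfolding cnt_def[OF m A] by (simp add: card_Un_disjoint)
qed

lemma cnt_full: "cnt m A t 1 m = card A"
proof -
  have "{v\<in>At m A t. 1 \<le> v \<and> v \<le> m} = At m A t" using At_sub[OF m A, of t] by auto
  then show ?thesis unfolding cnt_def[OF m A] using At_card[OF m A] by simp
qed

lemma card_le_cnt: "j \<le> m \<Longrightarrow> card {v\<in>At m A t. v \<le> j} = cnt m A t 1 j"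
proof -
  have "{v\<in>At m A t. v \<le> j} = {v\<in>At m A t. 1 \<le> v \<and> v \<le> j}" using At_sub[OF m A, of t] by auto
  then show ?thesis unfolding cnt_def[OF m A] by simp
qed

lemma d_count: assumes i: "1 \<le> i" "i \<le> card A" and j: "1 \<le> j" "j \<le> m"
  shows "(\<Sum>t<m. of_bool (j \<in> At m A t \<and> card {v\<in>At m A t. v \<le> j} = i) :: real)
       = (\<Sum>t<m. of_bool (m+1-j \<in> At m A t \<and> card {v\<in>At m A t. v \<le> m+1-j} = card A + 1 - i))"
proof -
  define s where "s = m - j"
  define j' where "j' = m + 1 - j"
  have js: "j' = s + 1" "j + s = m" "1 \<le> j'" "j' \<le> m" using j by (auto simp: s_def j'_def)
  define N where "N t = cnt m A t j' m" for t
  define H where "H t = (of_bool (m \<in> At m A t \<and> N t = i) :: real)" for t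
  have Hper: "H (t + m) = H t" for t unfolding H_def N_def using cnt_per At_per[OF m A] by simp
  have Nper: "N (t + m) = N t" for t unfolding N_def using cnt_per by simp
  have L: "(\<Sum>t<m. of_bool (j \<in> At m A t \<and> card {v\<in>At m A t. v \<le> j} = i) :: real) = (\<Sum>t<m. H t)"
  proof -
    have "of_bool (j \<in> At m A t \<and> card {v\<in>At m A t. v \<le> j} = i) = H (t + s)" for t
    proof -
      have "j + s \<in> At m A (t + s) \<longleftrightarrow> j \<in> At m A t" by (rule At_shift[OF m A]) (use js j in auto)
      moreover have "cnt m A (t + s) (1 + s) (j + s) = cnt m A t 1 j" by (rule cnt_shift[OF m A]) (use js in auto)
      ultimately show ?thesis unfolding H_def N_def using card_le_cnt[of j t] js j by simp
    qed
    then have "(\<Sum>t<m. of_bool (j \<in> At m A t \<and> card {v\<in>At m A t. v \<le> j} = i) :: real) = (\<Sum>t<m. H (t + s))"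
      by simp
    also have "\<dots> = (\<Sum>t<m. H t)" by (rule sum_shift) (rule Hper)
    finally show ?thesis .
  qed
  have R: "(\<Sum>t<m. of_bool (m+1-j \<in> At m A t \<and> card {v\<in>At m A t. v \<le> m+1-j} = card A + 1 - i) :: real)
        = (\<Sum>t<m. of_bool (j' \<in> At m A t \<and> N t = i))"
  proof (rule sum.cong[OF refl])
    fix t
    have c1: "cnt m A t 1 m = cnt m A t 1 j' + cnt m A t (j'+1) m" by (rule cnt_concat) (use js in auto)
    have c2: "cnt m A t j' m = of_bool (j' \<in> At m A t) + cnt m A t (j'+1) m" by (rule cnt_split_bot[OF m A]) (use js in auto)
    have "card {v\<in>At m A t. v \<le> j'} = cnt m A t 1 j'" using card_le_cnt js by auto
    then show "of_bool (m+1-j \<in> At m A t \<and> card {v\<in>At m A t. v \<le> m+1-j} = card A + 1 - i)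
        = (of_bool (j' \<in> At m A t \<and> N t = i) :: real)"
      using c1 c2 cnt_full[of t] i unfolding N_def j'_def[symmetric] by auto
  qed
  show ?thesis
  proof (cases "j = m")
    case True
    then have j1: "j' = 1" using js by (simp add: j'_def)
    have Nk: "N t = card A" for t using cnt_full j1 by (simp add: N_def)
    have "(\<Sum>t<m. H t) = (\<Sum>t<m. of_bool (j' \<in> At m A t \<and> N t = i))"
    proof (cases "i = card A")
      case True
      have "(\<Sum>t<m. H t) = (\<Sum>t<m. of_bool (m \<in> At m A t))" unfolding H_def using Nk True by simp
      also have "\<dots> = card A" by (rule f_count[OF m A]) (use m in auto)
      also have "\<dots> = (\<Sum>t<m. of_bool (1 \<in> At m A t))" by (rule f_count[OF m A, symmetric]) (use m in auto)
      also have "\<dots> = (\<Sum>t<m. of_bool (j' \<in> At m A t \<and> N t = i))" using Nk True j1 by simp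
      finally show ?thesis .
    next
      case False then show ?thesis unfolding H_def using Nk by simp
    qed
    then show ?thesis using L R by simp
  next
    case False
    then have j2: "2 \<le> j'" using js j by (auto simp: j'_def)
    define e where "e t = (j' - 1 \<in> At m A t)" for t
    define l where "l t = (m \<in> At m A t)" for t
    have rec: "N (t + 1) + of_bool (l t) = N t + of_bool (e t)" for t
    proof -
      have "N (t+1) = cnt m A (t + 1) ((j' - 1) + 1) ((m - 1) + 1)" using j2 m by (simp add: N_def)
      also have "\<dots> = cnt m A t (j' - 1) (m - 1)" by (rule cnt_shift[OF m A]) (use j2 m in auto)
      finally have a: "N (t+1) = cnt m A t (j' - 1) (m - 1)" .
      have b: "cnt m A t (j'-1) ((m-1)+1) = cnt m A t (j'-1) (m-1) + of_bool ((m-1)+1 \<in> At m A t)"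
        by (rule cnt_split_top[OF m A]) (use j2 js m in auto)
      have c: "cnt m A t (j'-1) m = of_bool (j' - 1 \<in> At m A t) + cnt m A t ((j'-1)+1) m"
        by (rule cnt_split_bot[OF m A]) (use j2 js in auto)
      show ?thesis using a b c m j2 by (simp add: N_def e_def l_def)
    qed
    have "(\<Sum>t<m. of_bool (j' \<in> At m A t \<and> N t = i) :: real)
        = (\<Sum>t<m. of_bool (j' \<in> At m A (t + 1) \<and> N (t + 1) = i))"
      by (rule sum_shift[symmetric]) (simp add: At_per[OF m A] Nper)
    also have "\<dots> = (\<Sum>t<m. of_bool (e t \<and> N (t + 1) = i))"
    proof (rule sum.cong[OF refl])
      fix t
      have "(j' - 1) + 1 \<in> At m A (t + 1) \<longleftrightarrow> j' - 1 \<in> At m A t" by (rule At_shift[OF m A]) (use j2 js in auto)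
      then show "(of_bool (j' \<in> At m A (t + 1) \<and> N (t + 1) = i) :: real) = of_bool (e t \<and> N (t + 1) = i)"
        using j2 by (simp add: e_def)
    qed
    finally have R2: "(\<Sum>t<m. of_bool (j' \<in> At m A t \<and> N t = i) :: real) = (\<Sum>t<m. of_bool (e t \<and> N (t + 1) = i))" .
    have "(\<Sum>t<m. of_bool (e t \<and> N (t + 1) = i)) - (\<Sum>t<m. H t)
        = (\<Sum>t<m. (of_bool (e t \<and> N (t + 1) = i) - of_bool (l t \<and> N t = i) :: real))"
      by (simp add: sum_subtractf H_def l_def)
    also have "\<dots> = (\<Sum>t<m. (of_bool (i \<le> N (Suc t)) - of_bool (i \<le> N t) :: real))"
      by (rule sum.cong[OF refl]) (use ptw[OF rec] in simp)
    also have "\<dots> = of_bool (i \<le> N m) - of_bool (i \<le> N 0)" by (rule sum_lessThan_telescope)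
    also have "\<dots> = 0" using Nper[of 0] by simp
    finally show ?thesis using L R R2 by simp
  qed
qed

end



lemma orbit_fin: assumes m: "0 < m" and x: "(F ^^ m) x = x"
  shows "orbit F x = (\<lambda>t. (F ^^ t) x) ` {..<m}"
proof
  show "orbit F x \<subseteq> (\<lambda>t. (F ^^ t) x) ` {..<m}"
  proof
    fix y assume "y \<in> orbit F x"
    then obtain n where "y = (F ^^ n) x" by (auto simp: orbit_def)
    then have "y = (F ^^ (n mod m)) x" using funpow_mod_eq[OF x, of n] by simp
    then show "y \<in> (\<lambda>t. (F ^^ t) x) ` {..<m}" using m by auto
  qed
qed (auto simp: orbit_def)

lemma shift_count: assumes m: "0 < m" and x: "(F ^^ m) x = x" and s: "s < m"
  and P: "\<And>t. (F ^^ t) x = a \<Longrightarrow> (F ^^ (t + s)) x = b"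
  shows "card {t\<in>{..<m}. (F ^^ t) x = a} \<le> card {t\<in>{..<m}. (F ^^ t) x = b}"
proof (rule card_inj_on_le)
  let ?\<phi> = "\<lambda>t. (t + s) mod m"
  show "inj_on ?\<phi> {t\<in>{..<m}. (F ^^ t) x = a}"
  proof (rule inj_on_inverseI)
    fix t assume "t \<in> {t\<in>{..<m}. (F ^^ t) x = a}"
    then have t: "t < m" by auto
    have "((t + s) mod m + (m - s)) mod m = (t + s + (m - s)) mod m" by (simp add: mod_add_left_eq)
    also have "\<dots> = (t + m) mod m" using s by simp
    also have "\<dots> = t" using t by simp
    finally show "((t + s) mod m + (m - s)) mod m = t" .
  qed
  show "?\<phi> ` {t\<in>{..<m}. (F ^^ t) x = a} \<subseteq> {t\<in>{..<m}. (F ^^ t) x = b}"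
  proof
    fix u assume "u \<in> ?\<phi> ` {t\<in>{..<m}. (F ^^ t) x = a}"
    then obtain t where t: "t < m" "(F ^^ t) x = a" "u = (t + s) mod m" by auto
    have "(F ^^ u) x = (F ^^ (t + s)) x" using t funpow_mod_eq[OF x, of "t+s"] by simp
    then show "u \<in> {t\<in>{..<m}. (F ^^ t) x = b}" using P[OF t(2)] t m by simp
  qed
qed simp

lemma orbit_avg_T: assumes m: "0 < m" and x: "(F ^^ m) x = x"
  shows "orbit_avg F g x = (\<Sum>t<m. g ((F ^^ t) x)) / m"
proof -
  define Ob where "Ob = orbit F x"
  have Ob: "Ob = (\<lambda>t. (F ^^ t) x) ` {..<m}" using orbit_fin[OF m x] Ob_def by simp
  define c where "c y = card {t\<in>{..<m}. (F ^^ t) x = y}" for y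
  have cc: "c y = c x" if yO: "y \<in> Ob" for y
  proof -
    obtain s where s: "s < m" "y = (F ^^ s) x" using yO unfolding Ob by blast
    have "c x \<le> c y" unfolding c_def
    proof (rule shift_count[OF m x s(1)])
      fix t assume "(F ^^ t) x = x"
      then show "(F ^^ (t + s)) x = y" using s by (simp add: funpow_add add.commute[of t s])
    qed
    moreover have "c y \<le> c x"
    proof (cases "s = 0")
      case True then show ?thesis using s by simp
    next
      case False
      show ?thesis unfolding c_def
      proof (rule shift_count[OF m x, of "m - s"])
        show "m - s < m" using s m False by auto
      next
        fix t assume "(F ^^ t) x = y"
        have "(F ^^ (t + (m - s))) x = (F ^^ ((m - s) + t)) x" by (simp add: add.commute)
        also have "\<dots> = (F ^^ (m - s)) ((F ^^ t) x)" by (simp only: funpow_add comp_apply)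
        also have "\<dots> = (F ^^ (m - s)) ((F ^^ s) x)" using \<open>(F ^^ t) x = y\<close> s by simp
        finally have "(F ^^ (t + (m - s))) x = (F ^^ (m - s)) ((F ^^ s) x)" .
        also have "\<dots> = (F ^^ ((m - s) + s)) x" by (simp only: funpow_add comp_apply)
        also have "\<dots> = (F ^^ m) x" using s by simp
        finally show "(F ^^ (t + (m - s))) x = x" using x by simp
      qed
    qed
    ultimately show ?thesis by simp
  qed
  have gen: "(\<Sum>t<m. h ((F ^^ t) x)) = c x * (\<Sum>y\<in>Ob. h y)" for h :: "'a \<Rightarrow> real"
  proof -
    have "(\<Sum>t<m. h ((F ^^ t) x)) = (\<Sum>y\<in>Ob. \<Sum>t\<in>{t\<in>{..<m}. (F ^^ t) x = y}. h ((F ^^ t) x))"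
      unfolding Ob by (rule sum.image_gen) simp
    also have "\<dots> = (\<Sum>y\<in>Ob. c y * h y)" unfolding c_def by (rule sum.cong) auto
    also have "\<dots> = (\<Sum>y\<in>Ob. c x * h y)" by (rule sum.cong[OF refl]) (simp add: cc)
    finally show ?thesis by (simp add: sum_distrib_left)
  qed
  have "real m = c x * real (card Ob)" using gen[of "\<lambda>_. 1"] by simp
  then have cx: "real (c x) \<noteq> 0" "real (card Ob) \<noteq> 0" using m by (metis mult_eq_0_iff of_nat_0_less_iff less_irrefl)+
  have "orbit_avg F g x = (\<Sum>y\<in>Ob. g y) / card Ob" by (simp add: orbit_avg_def Ob_def)
  also have "\<dots> = (c x * (\<Sum>y\<in>Ob. g y)) / (c x * card Ob)" using cx by simp
  also have "\<dots> = (\<Sum>t<m. g ((F ^^ t) x)) / m" using gen[of g] \<open>real m = c x * real (card Ob)\<close> by simp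
  finally show ?thesis .
qed



lemma pow_in: "(\<And>y. y \<in> X \<Longrightarrow> f y \<in> X) \<Longrightarrow> y \<in> X \<Longrightarrow> (f ^^ n) y \<in> X"
  by (induction n) auto

lemma orbit_struct_conj:
  assumes b: "bij_betw \<phi> SS K" and fS: "\<And>y. y \<in> SS \<Longrightarrow> f y \<in> SS"
  and c: "\<And>y. y \<in> SS \<Longrightarrow> \<phi> (f y) = g (\<phi> y)"
  shows "orbit_structure f SS = orbit_structure g K"
proof -
  have pw: "\<phi> ((f ^^ n) y) = (g ^^ n) (\<phi> y)" if "y \<in> SS" for y n
  proof (induction n)
    case (Suc n)
    have "(f ^^ n) y \<in> SS" by (rule pow_in) (use fS that in auto)
    then show ?case using Suc c by simp
  qed simp
  have orb: "orbit g (\<phi> y) = \<phi> ` orbit f y" if "y \<in> SS" for y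
  proof
    show "orbit g (\<phi> y) \<subseteq> \<phi> ` orbit f y"
    proof
      fix z assume "z \<in> orbit g (\<phi> y)"
      then obtain n where "z = (g ^^ n) (\<phi> y)" by (auto simp: orbit_def)
      then have "z = \<phi> ((f ^^ n) y)" using pw[OF that] by simp
      then show "z \<in> \<phi> ` orbit f y" by (auto simp: orbit_def)
    qed
  next
    show "\<phi> ` orbit f y \<subseteq> orbit g (\<phi> y)" using pw[OF that] by (auto simp: orbit_def)
  qed
  have osub: "orbit f y \<subseteq> SS" if "y \<in> SS" for y
    unfolding orbit_def using pow_in[of SS f, OF fS that] by auto
  have K: "K = \<phi> ` SS" using b by (simp add: bij_betw_def)
  have inj: "inj_on \<phi> SS" using b by (simp add: bij_betw_def)
  have e1: "orbit g ` K = (\<lambda>X. \<phi> ` X) ` (orbit f ` SS)"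
    unfolding K using orb by (auto simp: image_iff)
  have inj2: "inj_on (\<lambda>X. \<phi> ` X) (orbit f ` SS)"
  proof (rule inj_onI)
    fix X Y assume "X \<in> orbit f ` SS" "Y \<in> orbit f ` SS" "\<phi> ` X = \<phi> ` Y"
    then show "X = Y" using inj_on_image_eq_iff[OF inj] osub by auto
  qed
  have "orbit_structure g K = image_mset card (mset_set ((\<lambda>X. \<phi> ` X) ` (orbit f ` SS)))"
    unfolding orbit_structure_def e1 ..
  also have "\<dots> = image_mset card (image_mset (\<lambda>X. \<phi> ` X) (mset_set (orbit f ` SS)))"
    by (simp add: image_mset_mset_set[OF inj2])
  also have "\<dots> = image_mset (\<lambda>X. card (\<phi> ` X)) (mset_set (orbit f ` SS))"
    by (simp add: multiset.map_comp comp_def)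
  also have "\<dots> = image_mset card (mset_set (orbit f ` SS))"
  proof (rule image_mset_cong)
    fix X assume "X \<in># mset_set (orbit f ` SS)"
    then have "X \<in> orbit f ` SS" by (cases "finite (orbit f ` SS)") auto
    then have "X \<subseteq> SS" using osub by auto
    then show "card (\<phi> ` X) = card X" using inj by (meson card_image inj_on_subset)
  qed
  finally show ?thesis by (simp add: orbit_structure_def)
qed

lemma S_sorted: "xs \<in> S k m \<Longrightarrow> sorted xs \<and> distinct xs"
  by (auto simp: S_def strict_sorted_iff)

lemma S_eq: "xs \<in> S k m \<Longrightarrow> ys \<in> S k m \<Longrightarrow> set xs = set ys \<Longrightarrow> xs = ys"
  using S_sorted sorted_distinct_set_unique by metis

lemma S_set: assumes "xs \<in> S k m" shows "set xs \<subseteq> {1..m}" "card (set xs) = k"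
  using assms by (auto simp: S_def distinct_card strict_sorted_iff Suc_le_eq)

lemma set_bij: "bij_betw set (S k m) {A. A \<subseteq> {1..m} \<and> card A = k}"
proof (rule bij_betw_imageI)
  show "inj_on set (S k m)" using S_eq by (meson inj_onI)
  show "set ` S k m = {A. A \<subseteq> {1..m} \<and> card A = k}"
  proof
    show "set ` S k m \<subseteq> {A. A \<subseteq> {1..m} \<and> card A = k}" using S_set by blast
  next
    show "{A. A \<subseteq> {1..m} \<and> card A = k} \<subseteq> set ` S k m"
    proof
      fix A assume A: "A \<in> {A. A \<subseteq> {1..m} \<and> card A = k}"
      then have fin: "finite A" using finite_subset by blast
      let ?xs = "sorted_list_of_set A"
      have "?xs \<in> S k m" using A fin by (auto simp: S_def Suc_le_eq)
      moreover have "set ?xs = A" using fin by simp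
      ultimately show "A \<in> set ` S k m" by force
    qed
  qed
qed

lemma rank: assumes xs: "xs \<in> S k m" and i: "1 \<le> i" "i \<le> k"
  shows "(xs!(i-1) = j) \<longleftrightarrow> (j \<in> set xs \<and> card {v\<in>set xs. v \<le> j} = i)"
proof -
  note F = S_facts[OF xs]
  have cq: "card {v\<in>set xs. v \<le> xs!q} = Suc q" if q: "q < k" for q
  proof -
    have "{v\<in>set xs. v \<le> xs!q} = (\<lambda>p. xs!p) ` {..q}"
    proof
      show "{v\<in>set xs. v \<le> xs!q} \<subseteq> (\<lambda>p. xs!p) ` {..q}"
      proof
        fix v assume "v \<in> {v\<in>set xs. v \<le> xs!q}"
        then obtain p where p: "p < k" "v = xs!p" "xs!p \<le> xs!q" using F(1) by (auto simp: in_set_conv_nth)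
        then have "p \<le> q" using F(2)[of q p] q by (meson leD not_le_imp_less)
        then show "v \<in> (\<lambda>p. xs!p) ` {..q}" using p by auto
      qed
    next
      show "(\<lambda>p. xs!p) ` {..q} \<subseteq> {v\<in>set xs. v \<le> xs!q}"
      proof
        fix v assume "v \<in> (\<lambda>p. xs!p) ` {..q}"
        then obtain p where p: "p \<le> q" "v = xs!p" by auto
        have "xs!p \<le> xs!q" using F(2)[of p q] p q by (cases "p = q") auto
        then show "v \<in> {v\<in>set xs. v \<le> xs!q}" using p q F(1) by auto
      qed
    qed
    moreover have "inj_on (\<lambda>p. xs!p) {..q}"
    proof (rule inj_onI)
      fix p p' assume "p \<in> {..q}" "p' \<in> {..q}" "xs!p = xs!p'"
      then show "p = p'" using F(2)[of p p'] F(2)[of p' p] q by (metis atMost_iff le_less_trans less_irrefl nat_neq_iff)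
    qed
    ultimately show ?thesis by (simp add: card_image)
  qed
  show ?thesis
  proof
    assume "xs!(i-1) = j"
    then show "j \<in> set xs \<and> card {v\<in>set xs. v \<le> j} = i" using cq[of "i-1"] i F(1) by auto
  next
    assume a: "j \<in> set xs \<and> card {v\<in>set xs. v \<le> j} = i"
    then obtain q where q: "q < k" "j = xs!q" using F(1) by (auto simp: in_set_conv_nth)
    then have "Suc q = i" using cq a by simp
    then show "xs!(i-1) = j" using q by auto
  qed
qed

lemma ffun_sum: assumes xs: "xs \<in> S k m" shows "ffun j xs = (\<Sum>i\<in>{1..k}. gfun i j xs)"
proof -
  note F = S_facts[OF xs]
  have "(\<Sum>i\<in>{1..k}. gfun i j xs) = (\<Sum>i\<in>{1..k}. of_bool (xs!(i-1) = j))"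
    by (rule sum.cong) (auto simp: gfun_def)
  also have "\<dots> = real (card ({1..k} \<inter> {i. xs!(i-1) = j}))" by (rule sum_of_bool_eq) simp_all
  also have "\<dots> = ffun j xs"
  proof (cases "j \<in> set xs")
    case True
    then obtain q where q: "q < k" "j = xs!q" using F(1) by (auto simp: in_set_conv_nth)
    have "{1..k} \<inter> {i. xs!(i-1) = j} = {Suc q}"
    proof
      show "{1..k} \<inter> {i. xs!(i-1) = j} \<subseteq> {Suc q}"
      proof
        fix i assume "i \<in> {1..k} \<inter> {i. xs!(i-1) = j}"
        then have "i - 1 < k" "xs!(i-1) = xs!q" "1 \<le> i" using q by auto
        then have "i - 1 = q" using F(2)[of "i-1" q] F(2)[of q "i-1"] q by (metis nat_neq_iff less_irrefl)
        then show "i \<in> {Suc q}" using \<open>1 \<le> i\<close> by auto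
      qed
    qed (use q in auto)
    then show ?thesis using True by (simp add: ffun_def)
  next
    case False
    have "{1..k} \<inter> {i. xs!(i-1) = j} = {}"
    proof (rule ccontr)
      assume "{1..k} \<inter> {i. xs!(i-1) = j} \<noteq> {}"
      then obtain i where i: "i \<in> {1..k}" "xs!(i-1) = j" by blast
      then have "i - 1 < length xs" using F(1) by auto
      then have "j \<in> set xs" using i(2) nth_mem by metis
      then show False using False by simp
    qed
    then show ?thesis using False by (simp add: ffun_def)
  qed
  finally show ?thesis by simp
qed



lemma Tsum_add: "Tsum k m F (\<lambda>x. f x + g x) y = Tsum k m F f y + Tsum k m F g y"
  by (simp add: Tsum_def sum.distrib)
lemma Tsum_sum: "Tsum k m F (\<lambda>x. \<Sum>i\<in>I. f i x) y = (\<Sum>i\<in>I. Tsum k m F (f i) y)"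
  unfolding Tsum_def by (rule sum.swap)
lemma Tsum_mult: "Tsum k m F (\<lambda>x. c * f x) y = c * Tsum k m F f y"
  by (simp add: Tsum_def sum_distrib_left)

theorem mainTheorem5:
  fixes k m :: nat and \<nu> :: "nat \<Rightarrow> nat"
  assumes "1 \<le> k" and "k \<le> m" and "\<nu> permutes {1..k}"
  shows "(\<forall>x\<in>S k m. (winch_perm k m \<nu> ^^ m) x = x)
    \<and> orbit_structure (winch_perm k m \<nu>) (S k m)
        = orbit_structure (rot m) {A. A \<subseteq> {1..m} \<and> card A = k}
    \<and> (\<forall>i\<in>{1..k}. \<forall>j\<in>{1..m}. homomesic_with (S k m) (winch_perm k m \<nu>) (dfun k m i j) 0)
    \<and> (\<forall>j\<in>{1..m}. homomesic_with (S k m) (winch_perm k m \<nu>) (ffun j) (real k / real m))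
    \<and> (\<forall>(a :: nat \<Rightarrow> nat \<Rightarrow> real) (b :: nat \<Rightarrow> real).
         homomesic (S k m) (winch_perm k m \<nu>)
           (\<lambda>x. (\<Sum>i\<in>{1..k}. \<Sum>j\<in>{1..m}. a i j * dfun k m i j x) + (\<Sum>j\<in>{1..m}. b j * ffun j x)))"
proof -
  have m0: "0 < m" using assms by auto
  define R where "R = rev [1..<k+1]"
  define WR where "WR = Wl k m R"
  have Rset: "set R \<subseteq> {1..k}" by (auto simp: R_def)
  have WRS: "WR y \<in> S k m" if "y \<in> S k m" for y using Wl_S[OF Rset that] by (simp add: WR_def)
  have WRset: "set (WR y) = rot m (set y)" if "y \<in> S k m" for y
    using WR_set[OF that assms(1)] by (simp add: WR_def R_def)
  have WRpow: "(WR ^^ t) y \<in> S k m \<and> set ((WR ^^ t) y) = (rot m ^^ t) (set y)" if "y \<in> S k m" for y t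
  proof (induction t)
    case (Suc t) then show ?case using WRS WRset by simp
  qed (use that in simp)
  have WRper: "(WR ^^ m) y = y" if "y \<in> S k m" for y
  proof (rule S_eq)
    show "(WR ^^ m) y \<in> S k m" "y \<in> S k m" using WRpow that by auto
    show "set ((WR ^^ m) y) = set y" using WRpow[OF that, of m] rotp_period[OF m0 S_set(1)[OF that]] by simp
  qed
  have P0: "Pc k m WR R" unfolding Pc_def by (intro exI[of _ id]) (auto simp: WR_def)
  define L where "L = map \<nu> [1..<k+1]"
  have inj: "inj_on \<nu> {1..k}" using assms(3) permutes_inj_on by blast
  have img: "\<nu> ` {1..k} = {1..k}" using assms(3) permutes_image by blast
  have s1: "set [1..<k+1] = {1..k}" by auto
  have Ld: "distinct L" "set L = {1..k}" unfolding L_def distinct_map set_map s1 using inj img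
    by auto
  have PL: "Pc k m WR L"
    by (rule Pc_all[of k m WR]) (use WRS WRper P0 Ld in \<open>auto simp: R_def\<close>)
  define W where "W = winch_perm k m \<nu>"
  have Weq: "W = Wl k m L" by (simp add: W_def winch_perm_def Wl_def L_def fold_map fun_eq_iff comp_def)
  obtain h where h: "bij_betw h (S k m) (S k m)" "\<forall>y\<in>S k m. h (W y) = WR (h y)"
    "\<forall>y\<in>S k m. \<forall>i\<in>{1..k}. \<forall>j. Tsum k m W (gfun i j) y = Tsum k m WR (gfun i j) (h y)"
    using PL unfolding Pc_def Weq by blast
  have hS: "h y \<in> S k m" if "y \<in> S k m" for y using h(1) that by (auto simp: bij_betw_def)
  have WS: "W y \<in> S k m" if "y \<in> S k m" for y using Wl_S[of L k y m] Ld that Weq by simp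
  have Wper: "\<forall>y\<in>S k m. (W ^^ m) y = y" unfolding Weq
    by (rule Pc_pow[of k m WR]) (use WRS WRper PL Ld in auto)
  have avg: "orbit_avg W g y = Tsum k m W g y / m" if "y \<in> S k m" for y g
    unfolding Tsum_def by (rule orbit_avg_T[OF m0]) (use Wper that in auto)
  have TRg: "Tsum k m WR (gfun i j) z = (\<Sum>t<m. of_bool (j \<in> (rot m ^^ t) (set z) \<and> card {v\<in>(rot m ^^ t) (set z). v \<le> j} = i))"
    if z: "z \<in> S k m" and i: "i \<in> {1..k}" for z i j
    unfolding Tsum_def
  proof (rule sum.cong[OF refl])
    fix t
    have "((WR ^^ t) z ! (i - 1) = j) \<longleftrightarrow> (j \<in> set ((WR ^^ t) z) \<and> card {v\<in>set ((WR ^^ t) z). v \<le> j} = i)"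
      by (rule rank) (use WRpow[OF z] i in auto)
    then show "gfun i j ((WR ^^ t) z) = of_bool (j \<in> (rot m ^^ t) (set z) \<and> card {v\<in>(rot m ^^ t) (set z). v \<le> j} = i)"
      using WRpow[OF z, of t] by (simp add: gfun_def)
  qed
  have TRf: "Tsum k m WR (ffun j) z = k" if z: "z \<in> S k m" and j: "j \<in> {1..m}" for z j
  proof -
    have "Tsum k m WR (ffun j) z = (\<Sum>t<m. of_bool (j \<in> (rot m ^^ t) (set z)))"
      unfolding Tsum_def by (rule sum.cong[OF refl]) (use WRpow[OF z] in \<open>simp add: ffun_def\<close>)
    also have "\<dots> = card (set z)" by (rule f_count[OF m0 S_set(1)[OF z] j])
    finally show ?thesis using S_set(2)[OF z] by simp
  qed
  have Tff: "Tsum k m F (ffun j) y = (\<Sum>i\<in>{1..k}. Tsum k m F (gfun i j) y)"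
    if FS: "\<And>y. y \<in> S k m \<Longrightarrow> F y \<in> S k m" and y: "y \<in> S k m" for F y j
  proof -
    have "Tsum k m F (ffun j) y = Tsum k m F (\<lambda>x. \<Sum>i\<in>{1..k}. gfun i j x) y"
      unfolding Tsum_def by (rule sum.cong[OF refl], rule ffun_sum, rule pow_in[of "S k m" F, OF FS y])
    then show ?thesis by (simp add: Tsum_sum)
  qed
  have TWf: "Tsum k m W (ffun j) y = k" if y: "y \<in> S k m" and j: "j \<in> {1..m}" for y j
  proof -
    have "Tsum k m W (ffun j) y = (\<Sum>i\<in>{1..k}. Tsum k m W (gfun i j) y)" by (rule Tff[OF WS y])
    also have "\<dots> = (\<Sum>i\<in>{1..k}. Tsum k m WR (gfun i j) (h y))" using h(3) y by simp
    also have "\<dots> = Tsum k m WR (ffun j) (h y)" by (rule Tff[OF WRS hS[OF y], symmetric])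
    also have "\<dots> = k" by (rule TRf[OF hS[OF y] j])
    finally show ?thesis .
  qed
  have TWd: "Tsum k m W (dfun k m i j) y = 0" if y: "y \<in> S k m" and i: "i \<in> {1..k}" and j: "j \<in> {1..m}" for y i j
  proof -
    have i2: "k + 1 - i \<in> {1..k}" using i by auto
    have "Tsum k m W (dfun k m i j) y = Tsum k m W (gfun i j) y - Tsum k m W (gfun (k + 1 - i) (m + 1 - j)) y"
      by (simp add: Tsum_def dfun_def sum_subtractf)
    also have "\<dots> = Tsum k m WR (gfun i j) (h y) - Tsum k m WR (gfun (k + 1 - i) (m + 1 - j)) (h y)"
      using h(3) y i i2 by simp
    also have "\<dots> = 0"
      using TRg[OF hS[OF y] i, of j] TRg[OF hS[OF y] i2, of "m + 1 - j"]
        d_count[OF m0 S_set(1)[OF hS[OF y]], of i j] S_set(2)[OF hS[OF y]] i j by simp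
    finally show ?thesis .
  qed
  have part1: "\<forall>x\<in>S k m. (winch_perm k m \<nu> ^^ m) x = x" using Wper W_def by simp
  have part2: "orbit_structure W (S k m) = orbit_structure (rot m) {A. A \<subseteq> {1..m} \<and> card A = k}"
  proof (rule orbit_struct_conj)
    show "bij_betw (set \<circ> h) (S k m) {A. A \<subseteq> {1..m} \<and> card A = k}"
      using bij_betw_trans[OF h(1) set_bij] .
    show "\<And>y. y \<in> S k m \<Longrightarrow> W y \<in> S k m" by (rule WS)
    show "(set \<circ> h) (W y) = rot m ((set \<circ> h) y)" if "y \<in> S k m" for y
      using h(2) that WRset[OF hS[OF that]] by simp
  qed
  have part3: "\<forall>i\<in>{1..k}. \<forall>j\<in>{1..m}. homomesic_with (S k m) W (dfun k m i j) 0"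
    unfolding homomesic_with_def using avg TWd by simp
  have part4: "\<forall>j\<in>{1..m}. homomesic_with (S k m) W (ffun j) (real k / real m)"
    unfolding homomesic_with_def using avg TWf by simp
  have part5: "homomesic (S k m) W
           (\<lambda>x. (\<Sum>i\<in>{1..k}. \<Sum>j\<in>{1..m}. a i j * dfun k m i j x) + (\<Sum>j\<in>{1..m}. b j * ffun j x))"
    for a :: "nat \<Rightarrow> nat \<Rightarrow> real" and b :: "nat \<Rightarrow> real"
  proof -
    have "orbit_avg W (\<lambda>x. (\<Sum>i\<in>{1..k}. \<Sum>j\<in>{1..m}. a i j * dfun k m i j x) + (\<Sum>j\<in>{1..m}. b j * ffun j x)) y
        = (\<Sum>j\<in>{1..m}. b j * k) / m" if y: "y \<in> S k m" for y
    proof -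
      have "Tsum k m W (\<lambda>x. (\<Sum>i\<in>{1..k}. \<Sum>j\<in>{1..m}. a i j * dfun k m i j x) + (\<Sum>j\<in>{1..m}. b j * ffun j x)) y
          = (\<Sum>i\<in>{1..k}. \<Sum>j\<in>{1..m}. a i j * Tsum k m W (dfun k m i j) y) + (\<Sum>j\<in>{1..m}. b j * Tsum k m W (ffun j) y)"
        by (simp add: Tsum_add Tsum_sum Tsum_mult)
      also have "\<dots> = (\<Sum>j\<in>{1..m}. b j * k)" using TWd[OF y] TWf[OF y] by simp
      finally show ?thesis using avg[OF y] by simp
    qed
    then show ?thesis unfolding homomesic_def homomesic_with_def by blast
  qed
  show ?thesis using part1 part2 part3 part4 part5 unfolding W_def by blast
qed

end
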